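(* Let $\mathbf{Y}\sim\mathcal{SUT}_{d,m}(\boldsymbol{\xi},\boldsymbol{\Omega},\boldsymbol{\Delta},\boldsymbol{\tau},\bar{\boldsymbol{\Gamma}},\nu)$ and let $Q_{\mathbf{Y}}=(\mathbf{Y}-\boldsymbol{\xi})^\top\boldsymbol{\Omega}^{-1}(\mathbf{Y}-\boldsymbol{\xi})$. Let $\boldsymbol{\Lambda}=\boldsymbol{\Delta}^\top\bar{\boldsymbol{\Omega}}^{-1}$ and let $(\mathbf{U}_0^{*\top},\mathbf{U}_1^\top)^\top\sim\mathcal{T}_{m+d}\left(\mathbf{0},\begin{pmatrix}\bar{\boldsymbol{\Gamma}}-\boldsymbol{\Delta}^\top\bar{\boldsymbol{\Omega}}^{-1}\boldsymbol{\Delta}&\mathbf{0}\\ \mathbf{0}&\bar{\boldsymbol{\Omega}}\end{pmatrix},\nu\right)$ with $\mathbf{U}_0^*\in\mathbb{R}^m$, $\mathbf{U}_1\in\mathbb{R}^d$, and let $Q_{\mathbf{U}_1}=\mathbf{U}_1^\top\bar{\boldsymbol{\Omega}}^{-1}\mathbf{U}_1$ with density $f_{Q_{\mathbf{U}_1}}$. Then $Q_{\mathbf{Y}}$ has density $$f_{Q_{\mathbf{Y}}}(v)=f_{Q_{\mathbf{U}_1}}(v)\,\frac{\mathrm{P}(\mathbf{U}_0^*<\boldsymbol{\Lambda}\mathbf{U}_1+\boldsymbol{\tau}\mid Q_{\mathbf{U}_1}=v)}{\mathrm{P}(\mathbf{U}_0^*<\boldsymbol{\Lambda}\mathbf{U}_1+\boldsymbol{\tau})},\qquad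 v>0,$$ where inequalities between vectors are componentwise.
   Context: Notation: $\mathcal{T}_k(\boldsymbol{\mu},\boldsymbol{\Sigma},\nu)$ is the $k$-dimensional Student $t$ distribution with location $\boldsymbol{\mu}$, dispersion $\boldsymbol{\Sigma}$ and $\nu>0$ degrees of freedom. Parameters: $\boldsymbol{\xi}\in\mathbb{R}^d$; $\boldsymbol{\Omega}$ a $d\times d$ positive definite matrix, $\boldsymbol{\omega}=\mathrm{diag}(\boldsymbol{\Omega})^{1/2}$, $\bar{\boldsymbol{\Omega}}=\boldsymbol{\omega}^{-1}\boldsymbol{\Omega}\boldsymbol{\omega}^{-1}$; $\boldsymbol{\Delta}$ a $d\times m$ matrix; $\bar{\boldsymbol{\Gamma}}$ an $m\times m$ correlation matrix; $\boldsymbol{\tau}\in\mathbb{R}^m$; $\nu>0$; with $\bar{\boldsymbol{\Omega}}^*=\begin{pmatrix}\bar{\boldsymbol{\Gamma}}&\boldsymbol{\Delta}^\top\\ \boldsymbol{\Delta}&\bar{\boldsymbol{\Omega}}\end{pmatrix}$ positive definite. Definition: if $(\mathbf{U}_0^\top,\mathbf{U}_1^\top)^\top\sim\mathcal{T}_{m+d}(\mathbf{0},\bar{\boldsymbol{\Omega}}^*,\nu)$ ($\mathbf{U}_0\in\mathbb{R}^m$, $\mathbf{U}_1\in\mathbb{R}^d$) and $\mathbf{Z}$ has the conditional distribution of $\mathbf{U}_1$ given $\mathbf{U}_0+\boldsymbol{\tau}>\mathbf{0}$ (componentwise), then $\mathbf{Y}=\boldsymbol{\xi}+\boldsymbol{\omega}\mathbf{Z}$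 has distribution $\mathcal{SUT}_{d,m}(\boldsymbol{\xi},\boldsymbol{\Omega},\boldsymbol{\Delta},\boldsymbol{\tau},\bar{\boldsymbol{\Gamma}},\nu)$. *)

theory Defs
  imports "HOL-Probability.Probability"
begin

text \<open>Positive (semi)definite matrices and correlation matrices.\<close>

definition sym_mat :: "real^'n^'n \<Rightarrow> bool" where
  "sym_mat A \<longleftrightarrow> transpose A = A"

definition pos_def_mat :: "real^'n^'n \<Rightarrow> bool" where
  "pos_def_mat A \<longleftrightarrow> sym_mat A \<and> (\<forall>x. x \<noteq> 0 \<longrightarrow> x \<bullet> (A *v x) > 0)"

definition corr_mat :: "real^'n^'n \<Rightarrow> bool" where
  "corr_mat A \<longleftrightarrow> sym_mat A \<and> (\<forall>x. x \<bullet> (A *v x) \<ge> 0) \<and> (\<forall>i. A $ i $ i = 1)"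

text \<open>omega = diag(Omega)^(1/2) and Omega-bar = omega^-1 Omega omega^-1.\<close>

definition scale_mat :: "real^'n^'n \<Rightarrow> real^'n^'n" where
  "scale_mat \<Omega> = (\<chi> i j. if i = j then sqrt (\<Omega> $ i $ i) else 0)"

definition corr_of :: "real^'n^'n \<Rightarrow> real^'n^'n" where
  "corr_of \<Omega> = (\<chi> i j. \<Omega> $ i $ j / (sqrt (\<Omega> $ i $ i) * sqrt (\<Omega> $ j $ j)))"

text \<open>Block matrix [[G, D^T],[D, O]] indexed by 'm + 'd, and stacking of vectors.\<close>

definition block_mat :: "real^'m::finite^'m \<Rightarrow> real^'m^'d::finite \<Rightarrow> real^'d^'d \<Rightarrow> real^('m + 'd)^('m + 'd)" where
  "block_mat G D Om = (\<chi> k l. case k of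
      Inl i \<Rightarrow> (case l of Inl j \<Rightarrow> G $ i $ j | Inr j \<Rightarrow> D $ j $ i)
    | Inr i \<Rightarrow> (case l of Inl j \<Rightarrow> D $ i $ j | Inr j \<Rightarrow> Om $ i $ j))"

definition vjoin :: "real^'m::finite \<Rightarrow> real^'d::finite \<Rightarrow> real^('m + 'd)" where
  "vjoin u0 u1 = (\<chi> k. case k of Inl i \<Rightarrow> u0 $ i | Inr j \<Rightarrow> u1 $ j)"

definition vfst :: "real^('m::finite + 'd::finite) \<Rightarrow> real^'m" where
  "vfst u = (\<chi> i. u $ Inl i)"

definition vsnd :: "real^('m::finite + 'd::finite) \<Rightarrow> real^'d" where
  "vsnd u = (\<chi> j. u $ Inr j)"

text \<open>Multivariate Student t distribution T_k(mu, Sigma, nu), k = CARD('n),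
  given by its Lebesgue density.\<close>

definition mvt_density :: "real^'n \<Rightarrow> real^'n^'n \<Rightarrow> real \<Rightarrow> real^'n \<Rightarrow> real" where
  "mvt_density \<mu> \<Sigma> \<nu> x =
     (let k = real CARD('n) in
      Gamma ((\<nu> + k) / 2) / (Gamma (\<nu> / 2) * (\<nu> * pi) powr (k / 2) * sqrt (det \<Sigma>))
      * (1 + ((x - \<mu>) \<bullet> (matrix_inv \<Sigma> *v (x - \<mu>))) / \<nu>) powr (- (\<nu> + k) / 2))"

definition mvt_measure :: "real^'n \<Rightarrow> real^'n^'n \<Rightarrow> real \<Rightarrow> (real^'n) measure" where
  "mvt_measure \<mu> \<Sigma> \<nu> = density lborel (\<lambda>x. ennreal (mvt_density \<mu> \<Sigma> \<nu> x))"

text \<open>The unified skew-t distribution SUT_{d,m}(xi, Omega, Delta, tau, Gamma, nu):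
  law of Y = xi + omega Z, where Z ~ U1 | U0 + tau > 0 and (U0,U1) ~ T_{m+d}(0, Omega*, nu).\<close>

definition SUT :: "real^'d \<Rightarrow> real^'d^'d \<Rightarrow> real^'m^'d \<Rightarrow> real^'m \<Rightarrow> real^'m^'m \<Rightarrow> real
                   \<Rightarrow> (real^'d) measure" where
  "SUT \<xi> \<Omega> \<Delta> \<tau> \<Gamma> \<nu> =
     (let T = mvt_measure 0 (block_mat \<Gamma> \<Delta> (corr_of \<Omega>)) \<nu>;
          E = {u. \<forall>i. vfst u $ i + \<tau> $ i > 0}
      in distr (uniform_measure T E) borel (\<lambda>u. \<xi> + scale_mat \<Omega> *v vsnd u))"

end

theory Submission imports Defs begin
instantiation sum :: (finite, finite) wellorder
begin
definition less_eq_sum :: "'a + 'b \<Rightarrow> 'a + 'b \<Rightarrow> bool" where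
  "less_eq_sum x y \<longleftrightarrow> to_nat x \<le> to_nat y"
definition less_sum :: "'a + 'b \<Rightarrow> 'a + 'b \<Rightarrow> bool" where
  "less_sum x y \<longleftrightarrow> to_nat x < to_nat y"
instance
proof
  fix x y z :: "'a + 'b"
  show "(x < y) = (x \<le> y \<and> \<not> y \<le> x)" unfolding less_eq_sum_def less_sum_def by auto
  show "x \<le> x" unfolding less_eq_sum_def by auto
  show "x \<le> y \<Longrightarrow> y \<le> z \<Longrightarrow> x \<le> z" unfolding less_eq_sum_def by auto
  show "x \<le> y \<Longrightarrow> y \<le> x \<Longrightarrow> x = y" unfolding less_eq_sum_def
    by (meson antisym inj_eq inj_to_nat)
  show "x \<le> y \<or> y \<le> x" unfolding less_eq_sum_def by auto
next
  fix P :: "'a + 'b \<Rightarrow> bool" and a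
  assume "\<And>x. (\<And>y. y < x \<Longrightarrow> P y) \<Longrightarrow> P x"
  then show "P a" unfolding less_sum_def
    by (induct a rule: measure_induct_rule[of to_nat]) blast
qed
end

lemma lborel_linear_invol:
  fixes Lm :: "((real, 'n::{finite,wellorder}) vec, 'n::{finite,wellorder}) vec"
  assumes LL: "Lm ** Lm = mat 1"
  shows "distr lborel borel (\<lambda>x. Lm *v x) = lborel"
proof (rule lborel_eqI[symmetric])
  show "sets (distr lborel borel (\<lambda>x. Lm *v x)) = sets borel" by simp
  have lin: "linear (\<lambda>x. Lm *v x)" by (simp add: matrix_vector_mul_linear)
  have meas: "(\<lambda>x. Lm *v x) \<in> borel_measurable borel"
    using lin by (intro borel_measurable_continuous_onI linear_continuous_on) (simp add: linear_conv_bounded_linear)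
  have inv: "\<And>x. Lm *v (Lm *v x) = x" using LL by (simp add: matrix_vector_mul_assoc)
  have detL: "\<bar>det Lm\<bar> = 1"
  proof -
    have "det (Lm ** Lm) = 1" using LL by simp
    then have "det Lm * det Lm = 1" by (simp add: det_mul)
    then have "det Lm = 1 \<or> det Lm = -1" by (simp only: square_eq_1_iff)
    then show ?thesis by auto
  qed
  fix l u :: "(real, 'n) vec"
  assume "\<And>b. b \<in> Basis \<Longrightarrow> l \<bullet> b \<le> u \<bullet> b"
  have pre: "(\<lambda>x. Lm *v x) -` box l u = (\<lambda>x. Lm *v x) ` box l u"
  proof (rule set_eqI)
    fix x
    show "x \<in> (\<lambda>x. Lm *v x) -` box l u \<longleftrightarrow> x \<in> (\<lambda>x. Lm *v x) ` box l u"
    proof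
      assume "x \<in> (\<lambda>x. Lm *v x) -` box l u"
      then have "Lm *v x \<in> box l u" by simp
      then have "Lm *v (Lm *v x) \<in> (\<lambda>x. Lm *v x) ` box l u" by (rule imageI)
      then show "x \<in> (\<lambda>x. Lm *v x) ` box l u" by (simp only: inv)
    next
      assume "x \<in> (\<lambda>x. Lm *v x) ` box l u"
      then obtain y where "y \<in> box l u" "x = Lm *v y" by blast
      then show "x \<in> (\<lambda>x. Lm *v x) -` box l u" by (simp add: inv)
    qed
  qed
  have fb: "(\<lambda>x. Lm *v x) ` box l u \<in> lmeasurable"
    by (rule measurable_linear_image[OF lin]) simp
  have "emeasure (distr lborel borel (\<lambda>x. Lm *v x)) (box l u) = emeasure lborel ((\<lambda>x. Lm *v x) -` box l u)"
    using meas by (subst emeasure_distr) auto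
  also have "\<dots> = emeasure lborel ((\<lambda>x. Lm *v x) ` box l u)"
    by (simp only: pre)
  also have "\<dots> = emeasure lebesgue ((\<lambda>x. Lm *v x) ` box l u)"
  proof -
    have "(\<lambda>x. Lm *v x) -` box l u \<in> sets borel" using meas by (simp add: measurable_sets_borel)
    then have "(\<lambda>x. Lm *v x) ` box l u \<in> sets lborel" using pre by simp
    then show ?thesis by simp
  qed
  also have "\<dots> = ennreal (measure lebesgue ((\<lambda>x. Lm *v x) ` box l u))"
    using fb by (simp add: emeasure_eq_measure2)
  also have "\<dots> = ennreal (measure lebesgue (box l u))"
    using measure_linear_image[OF lin, of "box l u"] detL by simp
  also have "\<dots> = emeasure lborel (box l u)"
    by (simp add: emeasure_eq_measure2 measure_completion)
  finally show "emeasure (distr lborel borel (\<lambda>x. Lm *v x)) (box l u) = (\<Prod>b\<in>Basis. (u - l) \<bullet> b)"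
    using \<open>\<And>b. b \<in> Basis \<Longrightarrow> l \<bullet> b \<le> u \<bullet> b\<close> by (simp add: emeasure_lborel_box_eq)
qed
definition bm :: "real^'m::finite^'m \<Rightarrow> real^'d::finite^'m \<Rightarrow> real^'m^'d \<Rightarrow> real^'d^'d \<Rightarrow> real^('m + 'd)^('m + 'd)" where
  "bm A B C D = (\<chi> k l. case k of
      Inl i \<Rightarrow> (case l of Inl j \<Rightarrow> A $ i $ j | Inr j \<Rightarrow> B $ i $ j)
    | Inr i \<Rightarrow> (case l of Inl j \<Rightarrow> C $ i $ j | Inr j \<Rightarrow> D $ i $ j))"

lemma bm_nth[simp]:
  "bm A B C D $ Inl i $ Inl j = A $ i $ j"
  "bm A B C D $ Inl i $ Inr j' = B $ i $ j'"
  "bm A B C D $ Inr i' $ Inl j = C $ i' $ j"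
  "bm A B C D $ Inr i' $ Inr j' = D $ i' $ j'"
  by (simp_all add: bm_def)

lemma sum_UNIV_sum: "(\<Sum>k\<in>(UNIV::('a::finite + 'b::finite) set). f k) = (\<Sum>i\<in>UNIV. f (Inl i)) + (\<Sum>j\<in>UNIV. f (Inr j))"
proof -
  have "(\<Sum>k\<in>(UNIV::('a + 'b) set). f k) = (\<Sum>k\<in>(UNIV <+> UNIV). f k)" by simp
  also have "\<dots> = (\<Sum>i\<in>UNIV. f (Inl i)) + (\<Sum>j\<in>UNIV. f (Inr j))"
    by (subst sum.Plus) (auto simp: comp_def)
  finally show ?thesis .
qed

lemma bm_eq_iff: "X = bm A B C D \<longleftrightarrow>
  (\<forall>i j. X $ Inl i $ Inl j = A $ i $ j) \<and> (\<forall>i j. X $ Inl i $ Inr j = B $ i $ j) \<and>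
  (\<forall>i j. X $ Inr i $ Inl j = C $ i $ j) \<and> (\<forall>i j. X $ Inr i $ Inr j = D $ i $ j)"
  apply (auto simp: vec_eq_iff)
  subgoal for k l by (cases k; cases l; simp)
  done

lemma block_mat_bm: "block_mat G D Om = bm G (transpose D) D Om"
  unfolding bm_eq_iff by (simp add: block_mat_def transpose_def)

lemma bm_mul: "bm A B C D ** bm A' B' C' D' =
   bm (A ** A' + B ** C') (A ** B' + B ** D') (C ** A' + D ** C') (C ** B' + D ** D')"
  unfolding bm_eq_iff by (simp add: matrix_matrix_mult_def sum_UNIV_sum)

lemma bm_transpose: "transpose (bm A B C D) = bm (transpose A) (transpose C) (transpose B) (transpose D)"
  unfolding bm_eq_iff by (simp add: transpose_def)

lemma bm_mat1: "(mat 1 :: real^('m::finite + 'd::finite)^('m + 'd)) = bm (mat 1) 0 0 (mat 1)"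
  unfolding bm_eq_iff by (simp add: mat_def)

lemma vfst_vjoin[simp]: "vfst (vjoin x y) = x" and vsnd_vjoin[simp]: "vsnd (vjoin x y) = y"
  by (simp_all add: vfst_def vsnd_def vjoin_def)

lemma vjoin_split: "vjoin (vfst u) (vsnd u) = u"
  by (simp add: vfst_def vsnd_def vjoin_def vec_eq_iff split: sum.splits)

lemma vjoin_nth[simp]: "vjoin x y $ Inl i = x $ i" "vjoin x y $ Inr j = y $ j"
  by (simp_all add: vjoin_def)

lemma bm_mulv: "bm A B C D *v vjoin x y = vjoin (A *v x + B *v y) (C *v x + D *v y)"
proof -
  have "\<And>k. (bm A B C D *v vjoin x y) $ k = vjoin (A *v x + B *v y) (C *v x + D *v y) $ k"
    subgoal for k by (cases k) (simp_all add: matrix_vector_mult_def sum_UNIV_sum)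
    done
  then show ?thesis by (simp add: vec_eq_iff)
qed

lemma inner_vjoin: "vjoin x y \<bullet> vjoin x' y' = x \<bullet> x' + y \<bullet> y'"
  by (simp add: inner_vec_def sum_UNIV_sum)

lemma vjoin_zero[simp]: "vjoin x y = 0 \<longleftrightarrow> x = 0 \<and> y = 0"
proof -
  have "vjoin 0 0 = (0::real^('m::finite + 'd::finite))" by (simp add: vec_eq_iff vjoin_def split: sum.split)
  then show ?thesis by (metis vfst_vjoin vsnd_vjoin)
qed

lemma mat_neg_mul[simp]: "(- A) ** (B::real^'n::finite^'m) = - (A ** B)"
  by (simp add: vec_eq_iff matrix_matrix_mult_def sum_negf)
lemma mat_mul_neg[simp]: "(A::real^'n::finite^'m) ** (- B) = - (A ** B)"
  by (simp add: vec_eq_iff matrix_matrix_mult_def sum_negf)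
lemma mat_zero_mul[simp]: "(0::real^'n::finite^'m) ** (B::real^'k^'n) = 0"
  by (simp add: vec_eq_iff matrix_matrix_mult_def)
lemma mat_mul_zero[simp]: "(A::real^'n::finite^'m) ** (0::real^'k^'n) = 0"
  by (simp add: vec_eq_iff matrix_matrix_mult_def)
lemma transpose_zero[simp]: "transpose (0::real^'n::finite^'m::finite) = 0"
  by (simp add: vec_eq_iff transpose_def)
lemma transpose_neg: "transpose (- (A::real^'n::finite^'m::finite)) = - transpose A"
  by (simp add: vec_eq_iff transpose_def)
lemma transpose_mat1: "transpose (mat 1 :: real^'n::finite^'n) = mat 1"
  by (simp add: transpose_mat)

lemma matrix_inv_unique':
  fixes A B :: "real^'n::finite^'n"
  assumes "A ** B = mat 1"
  shows "matrix_inv A = B"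
proof -
  have BA: "B ** A = mat 1" using assms matrix_left_right_inverse by blast
  have ex: "\<exists>A'. A ** A' = mat 1 \<and> A' ** A = mat 1" using assms BA by blast
  define A' where "A' = matrix_inv A"
  have A': "A ** A' = mat 1 \<and> A' ** A = mat 1"
    unfolding A'_def matrix_inv_def by (rule someI_ex[OF ex])
  have "A' = A' ** (A ** B)" using assms by simp
  also have "\<dots> = (A' ** A) ** B" by (simp add: matrix_mul_assoc)
  also have "\<dots> = B" using A' by simp
  finally show ?thesis unfolding A'_def .
qed

lemma pos_def_right_inv:
  fixes A :: "real^'n::finite^'n"
  assumes "pos_def_mat A"
  shows "A ** matrix_inv A = mat 1" "matrix_inv A ** A = mat 1"
proof -
  have "\<forall>x. A *v x = 0 \<longrightarrow> x = 0"
  proof (intro allI impI)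
    fix x assume "A *v x = 0"
    then have "x \<bullet> (A *v x) = 0" by simp
    then show "x = 0" using assms unfolding pos_def_mat_def by (metis less_irrefl)
  qed
  then obtain B where "B ** A = mat 1" using matrix_left_invertible_ker by blast
  then have AB: "A ** B = mat 1" using matrix_left_right_inverse by blast
  then have "matrix_inv A = B" by (rule matrix_inv_unique')
  then show "A ** matrix_inv A = mat 1" "matrix_inv A ** A = mat 1"
    using AB matrix_left_right_inverse by auto
qed

lemma sym_nth: "sym_mat X \<Longrightarrow> X $ i $ j = X $ j $ i"
  unfolding sym_mat_def by (metis transpose_def vec_lambda_beta)

lemma pd_block_lower:
  assumes "pos_def_mat (block_mat G D Om)"
  shows "pos_def_mat Om"
proof -
  let ?X = "block_mat G D Om"
  have s: "sym_mat ?X" using assms unfolding pos_def_mat_def by blast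
  have "sym_mat Om" unfolding sym_mat_def
  proof (simp add: vec_eq_iff transpose_def, intro allI)
    fix i j
    have "?X $ Inr i $ Inr j = ?X $ Inr j $ Inr i" by (rule sym_nth[OF s])
    then show "Om $ j $ i = Om $ i $ j" by (simp add: block_mat_def)
  qed
  moreover have "z \<bullet> (Om *v z) > 0" if "z \<noteq> 0" for z
  proof -
    have "vjoin 0 z \<noteq> 0" using that by simp
    then have "vjoin 0 z \<bullet> (?X *v vjoin 0 z) > 0" using assms unfolding pos_def_mat_def by blast
    then show ?thesis by (simp add: block_mat_bm bm_mulv inner_vjoin)
  qed
  ultimately show ?thesis unfolding pos_def_mat_def by blast
qed

lemma inner_transpose_mulv: "(x::real^'n::finite) \<bullet> (transpose A *v y) = (A *v x) \<bullet> y"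
  by (metis dot_lmul_matrix inner_commute transpose_matrix_vector transpose_transpose)

lemma inner_sym_mulv: "transpose A = A \<Longrightarrow> (x::real^'n::finite) \<bullet> (A *v y) = (A *v x) \<bullet> y"
  by (metis inner_transpose_mulv)

lemma invol_congruence:
  fixes Lm Dg S :: "real^'n::finite^'n"
  assumes LL: "Lm ** Lm = mat 1" and S: "S = Lm ** Dg ** transpose Lm"
    and SS: "S ** matrix_inv S = mat 1"
  shows "det S = det Dg" "(Lm *v u) \<bullet> (matrix_inv S *v (Lm *v u)) = u \<bullet> (matrix_inv Dg *v u)"
proof -
  have dL: "det Lm * det Lm = 1" using LL by (metis det_I det_mul)
  show dS: "det S = det Dg" using S dL by (simp add: det_mul)
  have "det S * det (matrix_inv S) = 1" using SS by (metis det_I det_mul)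
  then have "det Dg \<noteq> 0" using dS by auto
  then have "invertible Dg" by (simp add: invertible_det_nz)
  then obtain Di where Di: "Dg ** Di = mat 1" unfolding invertible_def by blast
  then have DD: "Dg ** matrix_inv Dg = mat 1" using matrix_inv_unique' by metis
  have LtLt: "transpose Lm ** transpose Lm = mat 1"
    using LL by (metis matrix_transpose_mul transpose_mat)
  have "S ** (transpose Lm ** matrix_inv Dg ** Lm)
      = Lm ** Dg ** (transpose Lm ** transpose Lm) ** matrix_inv Dg ** Lm"
    using S by (simp add: matrix_mul_assoc)
  also have "\<dots> = Lm ** (Dg ** matrix_inv Dg) ** Lm" using LtLt by (simp add: matrix_mul_assoc)
  also have "\<dots> = mat 1" using DD LL by simp
  finally have "matrix_inv S = transpose Lm ** matrix_inv Dg ** Lm" by (rule matrix_inv_unique')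
  moreover have LLu: "Lm *v (Lm *v u) = u" using LL by (simp add: matrix_vector_mul_assoc)
  ultimately have "matrix_inv S *v (Lm *v u) = transpose Lm *v (matrix_inv Dg *v u)"
    by (simp only: matrix_vector_mul_assoc[symmetric])
  then show "(Lm *v u) \<bullet> (matrix_inv S *v (Lm *v u)) = u \<bullet> (matrix_inv Dg *v u)"
    by (simp only: inner_transpose_mulv LLu)
qed

lemma neg_mat_mulv: "(- A) *v (x::real^'n::finite) = - (A *v x)"
  by (simp add: vec_eq_iff matrix_vector_mult_def sum_negf)

lemma Lm_facts:
  fixes G :: "real^'m::finite^'m" and D :: "real^'m^'d::finite" and Om :: "real^'d^'d"
  assumes OO: "Om ** matrix_inv Om = mat 1" "matrix_inv Om ** Om = mat 1"
    and Osym: "transpose Om = Om"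
  defines "\<Lambda> \<equiv> transpose D ** matrix_inv Om"
  defines "Lm \<equiv> bm (- mat 1) \<Lambda> 0 (mat 1)"
  shows "Lm ** Lm = mat 1"
    "block_mat G D Om = Lm ** block_mat (G - \<Lambda> ** D) 0 Om ** transpose Lm"
    "Lm *v vjoin x y = vjoin (\<Lambda> *v y - x) y"
proof -
  show "Lm ** Lm = mat 1" unfolding Lm_def bm_mul bm_mat1 by simp
  show "Lm *v vjoin x y = vjoin (\<Lambda> *v y - x) y" unfolding Lm_def bm_mulv
    by (simp add: matrix_vector_mul_lid matrix_vector_mult_0 neg_mat_mulv)
  have iT: "transpose (matrix_inv Om) = matrix_inv Om"
  proof -
    have "transpose (matrix_inv Om) ** Om = mat 1"
      using OO(1) Osym by (metis matrix_transpose_mul transpose_mat)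
    then have "Om ** transpose (matrix_inv Om) = mat 1" using matrix_left_right_inverse by blast
    then show ?thesis using matrix_inv_unique' by metis
  qed
  have LO: "\<Lambda> ** Om = transpose D" unfolding \<Lambda>_def using OO by (simp flip: matrix_mul_assoc)
  have OL: "Om ** transpose \<Lambda> = D" using LO Osym by (metis matrix_transpose_mul transpose_transpose)
  have TL: "transpose D ** transpose \<Lambda> = \<Lambda> ** D"
    unfolding \<Lambda>_def by (simp add: matrix_transpose_mul iT matrix_mul_assoc)
  have LOL: "\<Lambda> ** Om ** transpose \<Lambda> = \<Lambda> ** D" using OL by (simp flip: matrix_mul_assoc)
  show "block_mat G D Om = Lm ** block_mat (G - \<Lambda> ** D) 0 Om ** transpose Lm"
    unfolding Lm_def block_mat_bm bm_mul bm_transpose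
    by (simp add: LO OL LOL TL transpose_neg transpose_mat1 matrix_mul_assoc)
qed

lemma sum_delta_mul1: "(\<Sum>k\<in>(UNIV::'n::finite set). (if i = k then a k else 0) * (b k::real)) = a i * b i"
proof -
  have "(\<Sum>k\<in>(UNIV::'n set). (if i = k then a k else 0) * (b k::real)) = (\<Sum>k\<in>UNIV. if i = k then a k * b k else 0)"
    by (rule sum.cong) auto
  also have "\<dots> = a i * b i" by simp
  finally show ?thesis .
qed

lemma sum_delta_mul2: "(\<Sum>k\<in>(UNIV::'n::finite set). (b k::real) * (if k = i then a k else 0)) = b i * a i"
proof -
  have "(\<Sum>k\<in>(UNIV::'n set). (b k::real) * (if k = i then a k else 0)) = (\<Sum>k\<in>UNIV. if k = i then b k * a k else 0)"
    by (rule sum.cong) auto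
  also have "\<dots> = b i * a i" by simp
  finally show ?thesis .
qed

lemma sum_delta_mul3: "(\<Sum>k\<in>(UNIV::'n::finite set). (if k = i then a k else 0) * (b k::real)) = a i * b i"
proof -
  have "(\<Sum>k\<in>(UNIV::'n set). (if k = i then a k else 0) * (b k::real)) = (\<Sum>k\<in>UNIV. if k = i then a k * b k else 0)"
    by (rule sum.cong) auto
  also have "\<dots> = a i * b i" by simp
  finally show ?thesis .
qed

lemma pd_diag_pos:
  assumes "pos_def_mat (A::real^'n::finite^'n)"
  shows "A $ i $ i > 0"
proof -
  have "axis i (1::real) \<noteq> 0" by (simp add: axis_eq_0_iff)
  then have "axis i 1 \<bullet> (A *v axis i 1) > 0" using assms unfolding pos_def_mat_def by blast
  moreover have "axis i 1 \<bullet> (A *v axis i 1) = A $ i $ i"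
    by (simp add: inner_axis' matrix_vector_mult_def) (simp add: axis_def sum_delta_mul2)
  ultimately show ?thesis by simp
qed

definition dg :: "('n::finite \<Rightarrow> real) \<Rightarrow> real^'n^'n" where
  "dg d = (\<chi> i j. if i = j then d i else 0)"

lemma dg_mul: "dg d ** A = (\<chi> i j. d i * A $ i $ j)"
  by (simp add: dg_def matrix_matrix_mult_def vec_eq_iff sum_delta_mul1)

lemma mul_dg: "A ** dg d = (\<chi> i j. A $ i $ j * d j)"
  by (simp add: dg_def matrix_matrix_mult_def vec_eq_iff sum_delta_mul2)

lemma dg_transpose: "transpose (dg d) = dg d"
  by (simp add: dg_def transpose_def vec_eq_iff)

lemma scale_dg: "scale_mat \<Omega> = dg (\<lambda>i. sqrt (\<Omega> $ i $ i))"
  by (simp add: scale_mat_def dg_def)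

lemma omega_facts:
  fixes \<Omega> :: "real^'d::finite^'d"
  assumes pd: "pos_def_mat \<Omega>"
  shows "matrix_inv (corr_of \<Omega>) = scale_mat \<Omega> ** matrix_inv \<Omega> ** scale_mat \<Omega>"
    "(scale_mat \<Omega> *v z) \<bullet> (matrix_inv \<Omega> *v (scale_mat \<Omega> *v z)) = z \<bullet> (matrix_inv (corr_of \<Omega>) *v z)"
proof -
  define s where "s i = sqrt (\<Omega> $ i $ i)" for i
  have sp: "s i > 0" for i using pd_diag_pos[OF pd] unfolding s_def by simp
  define Wi where "Wi = dg (\<lambda>i. 1 / s i)"
  have W: "scale_mat \<Omega> = dg s" unfolding scale_dg s_def ..
  have C: "corr_of \<Omega> = Wi ** \<Omega> ** Wi"
    unfolding Wi_def dg_mul mul_dg corr_of_def s_def by (simp add: vec_eq_iff)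
  have WiW: "Wi ** dg s = mat 1"
  proof -
    have snz: "s i \<noteq> 0" for i using sp[of i] by linarith
    show ?thesis unfolding Wi_def dg_mul using snz by (simp add: vec_eq_iff dg_def mat_def)
  qed
  have OO: "\<Omega> ** matrix_inv \<Omega> = mat 1" using pos_def_right_inv[OF pd] by simp
  have "corr_of \<Omega> ** (dg s ** matrix_inv \<Omega> ** dg s) = Wi ** \<Omega> ** (Wi ** dg s) ** matrix_inv \<Omega> ** dg s"
    unfolding C by (simp add: matrix_mul_assoc)
  also have "\<dots> = Wi ** (\<Omega> ** matrix_inv \<Omega>) ** dg s" unfolding WiW by (simp add: matrix_mul_assoc)
  also have "\<dots> = mat 1" unfolding OO using WiW by simp
  finally have inv: "matrix_inv (corr_of \<Omega>) = dg s ** matrix_inv \<Omega> ** dg s" by (rule matrix_inv_unique')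
  then show "matrix_inv (corr_of \<Omega>) = scale_mat \<Omega> ** matrix_inv \<Omega> ** scale_mat \<Omega>" unfolding W .
  show "(scale_mat \<Omega> *v z) \<bullet> (matrix_inv \<Omega> *v (scale_mat \<Omega> *v z)) = z \<bullet> (matrix_inv (corr_of \<Omega>) *v z)"
    unfolding inv W by (simp add: inner_sym_mulv[OF dg_transpose] matrix_vector_mul_assoc[symmetric])
qed

lemma pd_inv_psd:
  assumes "pos_def_mat (A::real^'n::finite^'n)"
  shows "x \<bullet> (matrix_inv A *v x) \<ge> 0"
proof -
  define y where "y = matrix_inv A *v x"
  have "x = A *v y" unfolding y_def using pos_def_right_inv(1)[OF assms]
    by (simp add: matrix_vector_mul_assoc)
  then have "x \<bullet> (matrix_inv A *v x) = (A *v y) \<bullet> y" unfolding y_def by simp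
  also have "\<dots> \<ge> 0"
  proof (cases "y = 0")
    case True then show ?thesis by simp
  next
    case False then show ?thesis using assms unfolding pos_def_mat_def
      by (metis inner_commute less_eq_real_def)
  qed
  finally show ?thesis .
qed

lemma mulv_borel[measurable]: "(\<lambda>x. (A::real^'n::finite^'m::finite) *v x) \<in> borel_measurable borel"
  by (intro borel_measurable_continuous_onI linear_continuous_on)
     (simp add: linear_conv_bounded_linear matrix_vector_mul_linear)

lemma mvt_density_borel[measurable]: "mvt_density \<mu> \<Sigma> \<nu> \<in> borel_measurable borel"
proof -
  have q: "(\<lambda>x. (x - \<mu>) \<bullet> (matrix_inv \<Sigma> *v (x - \<mu>))) \<in> borel_measurable borel"
    by measurable
  show ?thesis unfolding mvt_density_def Let_def using q by measurable
qed

lemma T_eq: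
  fixes \<Gamma> :: "real^'m::finite^'m" and \<Delta> :: "real^'m^'d::finite" and Om :: "real^'d^'d"
  assumes Spd: "pos_def_mat (block_mat \<Gamma> \<Delta> Om)"
  defines "\<Lambda> \<equiv> transpose \<Delta> ** matrix_inv Om"
  defines "Lm \<equiv> bm (- mat 1) \<Lambda> 0 (mat 1)"
  shows "mvt_measure 0 (block_mat \<Gamma> \<Delta> Om) \<nu> =
         distr (mvt_measure 0 (block_mat (\<Gamma> - \<Lambda> ** \<Delta>) 0 Om) \<nu>) borel (\<lambda>u. Lm *v u)"
proof -
  let ?S = "block_mat \<Gamma> \<Delta> Om" and ?D = "block_mat (\<Gamma> - \<Lambda> ** \<Delta>) 0 Om"
  have Opd: "pos_def_mat Om" by (rule pd_block_lower[OF Spd])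
  have OO: "Om ** matrix_inv Om = mat 1" "matrix_inv Om ** Om = mat 1"
    using pos_def_right_inv[OF Opd] by auto
  have Osym: "transpose Om = Om" using Opd unfolding pos_def_mat_def sym_mat_def by blast
  have LL: "Lm ** Lm = mat 1" unfolding Lm_def \<Lambda>_def by (rule Lm_facts(1)[OF OO Osym])
  have Sdec: "?S = Lm ** ?D ** transpose Lm" unfolding Lm_def \<Lambda>_def by (rule Lm_facts(2)[OF OO Osym])
  have SS: "?S ** matrix_inv ?S = mat 1" using pos_def_right_inv[OF Spd] by auto
  note IC = invol_congruence[OF LL Sdec SS]
  have dens: "mvt_density 0 ?D \<nu> u = mvt_density 0 ?S \<nu> (Lm *v u)" for u
    unfolding mvt_density_def Let_def using IC by simp
  have LLu: "Lm *v (Lm *v u) = u" for u using LL by (simp add: matrix_vector_mul_assoc)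
  have lb: "distr lborel borel (\<lambda>u. Lm *v u) = lborel"
    by (rule lborel_linear_invol[OF LL])
  have "distr (density (distr lborel borel (\<lambda>u. Lm *v u)) (\<lambda>x. ennreal (mvt_density 0 ?D \<nu> x))) lborel (\<lambda>u. Lm *v u)
        = density lborel ((\<lambda>x. ennreal (mvt_density 0 ?D \<nu> x)) \<circ> (\<lambda>u. Lm *v u))"
    by (rule distr_density_distr) (auto simp: LLu)
  also have "(\<lambda>x. ennreal (mvt_density 0 ?D \<nu> x)) \<circ> (\<lambda>u. Lm *v u) = (\<lambda>x. ennreal (mvt_density 0 ?S \<nu> x))"
    by (auto simp: dens LLu)
  finally have "distr (mvt_measure 0 ?D \<nu>) lborel (\<lambda>u. Lm *v u) = mvt_measure 0 ?S \<nu>"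
    unfolding lb mvt_measure_def .
  then show ?thesis by (simp cong: distr_cong)
qed

definition Ein1 :: "real^'m::finite^('m + 'd::finite)" where
  "Ein1 = (\<chi> k i. if k = Inl i then 1 else 0)"
definition Ein2 :: "real^'d::finite^('m::finite + 'd)" where
  "Ein2 = (\<chi> k i. if k = Inr i then 1 else 0)"

lemma vjoin_Ein: "vjoin x y = Ein1 *v x + Ein2 *v y"
proof -
  have "vjoin x y $ k = (Ein1 *v x + Ein2 *v y) $ k" for k
    by (cases k) (simp_all add: Ein1_def Ein2_def matrix_vector_mult_def sum_delta_mul1)
  then show ?thesis by (simp add: vec_eq_iff)
qed

lemma vsnd_Ein: "vsnd u = transpose Ein2 *v u"
proof -
  have "vsnd u $ j = (transpose Ein2 *v u) $ j" for j
    by (simp add: vsnd_def Ein2_def transpose_def matrix_vector_mult_def sum_UNIV_sum sum_delta_mul3)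
  then show ?thesis by (simp add: vec_eq_iff)
qed

lemma mulv_borel_raw[measurable (raw)]:
  "f \<in> borel_measurable M \<Longrightarrow> (\<lambda>x. (A::real^'n::finite^'m::finite) *v f x) \<in> borel_measurable M"
  by (rule measurable_compose[OF _ mulv_borel])

lemma vjoin_borel[measurable (raw)]:
  "f \<in> borel_measurable M \<Longrightarrow> g \<in> borel_measurable M \<Longrightarrow> (\<lambda>x. vjoin (f x) (g x)) \<in> borel_measurable M"
  unfolding vjoin_Ein by (intro borel_measurable_add mulv_borel_raw)

lemma vsnd_borel[measurable]: "vsnd \<in> borel_measurable borel"
  unfolding vsnd_Ein by measurable

lemma ennreal_div_real: "p > 0 \<Longrightarrow> ennreal (x / p) = ennreal x / ennreal p"
proof (cases "x \<ge> 0")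
  case True
  assume "p > 0" then show ?thesis using True by (simp add: divide_ennreal)
next
  case False
  assume "p > 0"
  then have "x / p < 0" using False by (simp add: divide_neg_pos)
  then show ?thesis using False by (simp add: ennreal_neg)
qed

lemma nth_borel_raw[measurable (raw)]:
  "f \<in> borel_measurable M \<Longrightarrow> (\<lambda>x. (f x :: real^'n::finite) $ i) \<in> borel_measurable M"
  by (rule measurable_compose[OF _ borel_measurable_nth])

theorem proposition8:
  fixes \<xi> :: "real^'d" and \<Omega> :: "real^'d^'d" and \<Delta> :: "real^'m^'d"
    and \<tau> :: "real^'m" and \<Gamma> :: "real^'m^'m" and \<nu> :: real
    and M :: "'a measure" and Y :: "'a \<Rightarrow> real^'d"
    and N :: "'b measure" and U0s :: "'b \<Rightarrow> real^'m" and U1 :: "'b \<Rightarrow> real^'d"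
    and g :: "real \<Rightarrow> real" and c :: "real \<Rightarrow> real"
  assumes \<Omega>_pd: "pos_def_mat \<Omega>"
    and \<Gamma>_corr: "corr_mat \<Gamma>"
    and star_pd: "pos_def_mat (block_mat \<Gamma> \<Delta> (corr_of \<Omega>))"
    and \<nu>_pos: "\<nu> > 0"
    and M: "prob_space M"
    and Y_meas: "Y \<in> borel_measurable M"
    and Y_law: "distr M borel Y = SUT \<xi> \<Omega> \<Delta> \<tau> \<Gamma> \<nu>"
    and N: "prob_space N"
    and U0s_meas: "U0s \<in> borel_measurable N"
    and U1_meas: "U1 \<in> borel_measurable N"
    and U_law: "distr N borel (\<lambda>w. vjoin (U0s w) (U1 w)) =
                mvt_measure 0 (block_mat (\<Gamma> - transpose \<Delta> ** matrix_inv (corr_of \<Omega>) ** \<Delta>) 0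
                                          (corr_of \<Omega>)) \<nu>"
    and g_nonneg: "\<forall>v. g v \<ge> 0"
    and g_density: "distributed N lborel
                      (\<lambda>w. U1 w \<bullet> (matrix_inv (corr_of \<Omega>) *v U1 w)) (\<lambda>v. ennreal (g v))"
    and c_meas: "c \<in> borel_measurable borel"
    and c_int: "integrable (distr N borel (\<lambda>w. U1 w \<bullet> (matrix_inv (corr_of \<Omega>) *v U1 w))) c"
    and c_cond: "\<forall>B \<in> sets borel.
        measure N {w \<in> space N.
            (\<forall>i. U0s w $ i < ((transpose \<Delta> ** matrix_inv (corr_of \<Omega>)) *v U1 w + \<tau>) $ i)
            \<and> U1 w \<bullet> (matrix_inv (corr_of \<Omega>) *v U1 w) \<in> B}
        = (LINT v:B | distr N borel (\<lambda>w. U1 w \<bullet> (matrix_inv (corr_of \<Omega>) *v U1 w)). c v)"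
  shows "distributed M lborel
           (\<lambda>w. (Y w - \<xi>) \<bullet> (matrix_inv \<Omega> *v (Y w - \<xi>)))
           (\<lambda>v. ennreal (if v > 0 then
                   g v * c v /
                   measure N {w \<in> space N.
                     \<forall>i. U0s w $ i < ((transpose \<Delta> ** matrix_inv (corr_of \<Omega>)) *v U1 w + \<tau>) $ i}
                 else 0))"
proof -
  define Ob where "Ob = corr_of \<Omega>"
  define \<Lambda> where "\<Lambda> = transpose \<Delta> ** matrix_inv Ob"
  define Lm where "Lm = bm (- mat 1) \<Lambda> 0 (mat 1)"
  define q where "q z = z \<bullet> (matrix_inv Ob *v z)" for z
  define QU where "QU w = q (U1 w)" for w
  define Ev where "Ev = {w \<in> space N. \<forall>i. U0s w $ i < (\<Lambda> *v U1 w + \<tau>) $ i}"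
  define E where "E = {u::real^('m + 'd). \<forall>i. vfst u $ i + \<tau> $ i > 0}"
  define T where "T = mvt_measure 0 (block_mat \<Gamma> \<Delta> Ob) \<nu>"
  define h where "h (u::real^('m + 'd)) = \<xi> + scale_mat \<Omega> *v vsnd u" for u
  define QYf where "QYf y = (y - \<xi>) \<bullet> (matrix_inv \<Omega> *v (y - \<xi>))" for y
  define P where "P = distr N borel QU"
  note [measurable] = U0s_meas U1_meas Y_meas c_meas
  interpret M: prob_space M by (rule M)
  interpret N: prob_space N by (rule N)
  have Spd: "pos_def_mat (block_mat \<Gamma> \<Delta> Ob)" using star_pd unfolding Ob_def .
  have Obpd: "pos_def_mat Ob" by (rule pd_block_lower[OF Spd])
  have OO: "Ob ** matrix_inv Ob = mat 1" "matrix_inv Ob ** Ob = mat 1"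
    using pos_def_right_inv[OF Obpd] by auto
  have Osym: "transpose Ob = Ob" using Obpd unfolding pos_def_mat_def sym_mat_def by blast
  have q_nn: "q z \<ge> 0" for z unfolding q_def by (rule pd_inv_psd[OF Obpd])
  have q_meas[measurable]: "q \<in> borel_measurable borel" unfolding q_def by measurable
  have QU_meas[measurable]: "QU \<in> borel_measurable N" unfolding QU_def by measurable
  have QYf_meas[measurable]: "QYf \<in> borel_measurable borel" unfolding QYf_def by measurable
  have h_meas[measurable]: "h \<in> borel_measurable borel" unfolding h_def by measurable
  have Lmv: "Lm *v vjoin x y = vjoin (\<Lambda> *v y - x) y" for x y
    unfolding Lm_def \<Lambda>_def by (rule Lm_facts(3)[OF OO Osym])
  have Tdist: "T = distr N borel (\<lambda>w. Lm *v vjoin (U0s w) (U1 w))"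
  proof -
    have "T = distr (mvt_measure 0 (block_mat (\<Gamma> - \<Lambda> ** \<Delta>) 0 Ob) \<nu>) borel (\<lambda>u. Lm *v u)"
      unfolding T_def Lm_def \<Lambda>_def by (rule T_eq[OF Spd])
    also have "mvt_measure 0 (block_mat (\<Gamma> - \<Lambda> ** \<Delta>) 0 Ob) \<nu> = distr N borel (\<lambda>w. vjoin (U0s w) (U1 w))"
      using U_law unfolding \<Lambda>_def Ob_def by simp
    also have "distr (distr N borel (\<lambda>w. vjoin (U0s w) (U1 w))) borel (\<lambda>u. Lm *v u)
       = distr N borel (\<lambda>w. Lm *v vjoin (U0s w) (U1 w))"
      by (subst distr_distr) (auto simp: comp_def)
    finally show ?thesis .
  qed
  have E_alt: "E = {u. \<forall>i. 0 < u $ Inl i + \<tau> $ i}" by (simp add: E_def vfst_def)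
  have E_sets[measurable]: "E \<in> sets borel" unfolding E_alt by measurable
  have spT: "space T = UNIV" by (simp add: T_def mvt_measure_def)
  have setsT: "sets T = sets borel" by (simp add: T_def mvt_measure_def)
  have Tev: "emeasure T ({u. q (vsnd u) \<in> B} \<inter> E) = emeasure N {w \<in> space N. (\<forall>i. U0s w $ i < (\<Lambda> *v U1 w + \<tau>) $ i) \<and> QU w \<in> B}"
    if B: "B \<in> sets borel" for B
  proof -
    have [measurable]: "{u. q (vsnd u) \<in> B} \<in> sets borel" using B by measurable
    have "emeasure T ({u. q (vsnd u) \<in> B} \<inter> E) = emeasure N ((\<lambda>w. Lm *v vjoin (U0s w) (U1 w)) -` ({u. q (vsnd u) \<in> B} \<inter> E) \<inter> space N)"
      unfolding Tdist by (rule emeasure_distr) auto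
    also have "(\<lambda>w. Lm *v vjoin (U0s w) (U1 w)) -` ({u. q (vsnd u) \<in> B} \<inter> E) \<inter> space N
       = {w \<in> space N. (\<forall>i. U0s w $ i < (\<Lambda> *v U1 w + \<tau>) $ i) \<and> QU w \<in> B}"
      by (auto simp: Lmv E_def QU_def algebra_simps)
    finally show ?thesis .
  qed
  have law: "emeasure (distr M lborel (\<lambda>w. QYf (Y w))) B =
     emeasure N {w \<in> space N. (\<forall>i. U0s w $ i < (\<Lambda> *v U1 w + \<tau>) $ i) \<and> QU w \<in> B} / emeasure N Ev"
    if B: "B \<in> sets borel" for B
  proof -
    have [measurable]: "{u. q (vsnd u) \<in> B} \<in> sets borel" using B by measurable
    have QB: "QYf -` B \<in> sets borel" using measurable_sets_borel[OF QYf_meas B] by simp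
    have SUT_eq: "SUT \<xi> \<Omega> \<Delta> \<tau> \<Gamma> \<nu> = distr (uniform_measure T E) borel h"
      unfolding SUT_def Let_def T_def E_def h_def Ob_def ..
    have hq: "QYf (h u) = q (vsnd u)" for u
      unfolding QYf_def h_def q_def Ob_def using omega_facts(2)[OF \<Omega>_pd] by simp
    have "emeasure (distr M lborel (\<lambda>w. QYf (Y w))) B = emeasure M ((\<lambda>w. QYf (Y w)) -` B \<inter> space M)"
      using B by (subst emeasure_distr) (auto simp: Y_meas)
    also have "\<dots> = emeasure M (Y -` QYf -` B \<inter> space M)" by (simp add: vimage_def)
    also have "\<dots> = emeasure (distr M borel Y) (QYf -` B)"
      using QB by (simp add: emeasure_distr)
    also have "\<dots> = emeasure (distr (uniform_measure T E) borel h) (QYf -` B)"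
      unfolding Y_law SUT_eq ..
    also have "\<dots> = emeasure (uniform_measure T E) (h -` QYf -` B \<inter> space (uniform_measure T E))"
    proof -
      have "sets (uniform_measure T E) = sets borel" by (simp add: setsT)
      note mc = measurable_cong_sets[OF this refl, of borel]
      have hU: "h \<in> borel_measurable (uniform_measure T E)"
        using h_meas by (simp only: mc)
      show ?thesis using hU QB by (subst emeasure_distr) auto
    qed
    also have "h -` QYf -` B \<inter> space (uniform_measure T E) = {u. q (vsnd u) \<in> B}"
      by (auto simp: spT hq)
    also have "emeasure (uniform_measure T E) {u. q (vsnd u) \<in> B} = emeasure T (E \<inter> {u. q (vsnd u) \<in> B}) / emeasure T E"
      by (subst emeasure_uniform_measure) (auto simp: setsT)
    also have "E \<inter> {u. q (vsnd u) \<in> B} = {u. q (vsnd u) \<in> B} \<inter> E" by blast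
    also have "emeasure T E = emeasure T ({u. q (vsnd u) \<in> UNIV} \<inter> E)" by simp
    also have "\<dots> = emeasure N Ev" using Tev[of UNIV] unfolding Ev_def by simp
    finally show ?thesis using Tev[OF B] by simp
  qed
  have Ev_sets[measurable]: "Ev \<in> sets N" unfolding Ev_def by measurable
  have one: "emeasure (distr M lborel (\<lambda>w. QYf (Y w))) UNIV = 1"
    by (subst emeasure_distr) (auto simp: M.emeasure_space_1)
  have eN0: "emeasure N Ev \<noteq> 0"
  proof
    assume "emeasure N Ev = 0"
    moreover have "emeasure (distr M lborel (\<lambda>w. QYf (Y w))) UNIV = emeasure N Ev / emeasure N Ev"
      using law[of UNIV] unfolding Ev_def by simp
    ultimately show False using one by simp
  qed
  define p where "p = measure N Ev"
  have eNp: "emeasure N Ev = ennreal p" by (simp add: N.emeasure_eq_measure p_def)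
  have p_pos: "p > 0" using eN0 eNp unfolding p_def by (simp add: zero_less_measure_iff)
  have gd: "distributed N lborel QU (\<lambda>v. ennreal (g v))"
    using g_density unfolding QU_def q_def Ob_def .
  have "(\<lambda>v. ennreal (g v)) \<in> borel_measurable borel"
    using distributed_borel_measurable[OF gd] by simp
  then have g_meas[measurable]: "g \<in> borel_measurable borel" using g_nonneg by simp
  have Pd: "P = density lborel (\<lambda>v. ennreal (g v))"
  proof -
    have "distr N borel QU = distr N lborel QU" by (rule distr_cong) auto
    then show ?thesis unfolding P_def using distributed_distr_eq_density[OF gd] by simp
  qed
  have cc: "\<forall>B\<in>sets borel. measure N {w \<in> space N. (\<forall>i. U0s w $ i < (\<Lambda> *v U1 w + \<tau>) $ i) \<and> QU w \<in> B}
      = (LINT v:B|P. c v)"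
    using c_cond unfolding P_def QU_def q_def \<Lambda>_def Ob_def .
  have cint: "integrable P c" using c_int unfolding P_def QU_def q_def Ob_def .
  have c_ae: "AE v in P. 0 \<le> c v"
  proof -
    define B0 where "B0 = {v. c v < 0}"
    have "B0 = c -` {..<0} \<inter> space borel" by (auto simp: B0_def)
    then have B0[measurable]: "B0 \<in> sets borel" using measurable_sets_borel[OF c_meas, of "{..<0}"] by simp
    have "measure N {w \<in> space N. (\<forall>i. U0s w $ i < (\<Lambda> *v U1 w + \<tau>) $ i) \<and> QU w \<in> B0} = (LINT v:B0|P. c v)"
      by (rule bspec[OF cc B0])
    then have "0 \<le> (LINT v:B0|P. c v)" using measure_nonneg by (rule subst)
    have int0: "integrable P (\<lambda>v. - (indicator B0 v * c v))"
      using integrable_mult_indicator[OF _ cint, of B0] by (simp add: P_def)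
    have nn0: "AE v in P. 0 \<le> - (indicator B0 v * c v)"
      by (auto simp: B0_def indicator_def)
    have "integral\<^sup>L P (\<lambda>v. - (indicator B0 v * c v)) = - (LINT v:B0|P. c v)"
      by (simp add: set_lebesgue_integral_def)
    moreover have "integral\<^sup>L P (\<lambda>v. - (indicator B0 v * c v)) \<ge> 0"
      using nn0 by (rule integral_nonneg_AE)
    ultimately have "integral\<^sup>L P (\<lambda>v. - (indicator B0 v * c v)) = 0"
      using \<open>0 \<le> (LINT v:B0|P. c v)\<close> by linarith
    then have "AE v in P. - (indicator B0 v * c v) = 0"
      using integral_nonneg_eq_0_iff_AE[OF int0 nn0] by simp
    then show ?thesis by eventually_elim (auto simp: B0_def indicator_def split: if_splits)
  qed
  have gc_ae: "AE v in lborel. 0 \<le> g v * c v"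
  proof -
    have "AE v in lborel. 0 < ennreal (g v) \<longrightarrow> 0 \<le> c v"
      using c_ae unfolding Pd by (subst (asm) AE_density) auto
    then show ?thesis
    proof eventually_elim
      case (elim v)
      show ?case
      proof (cases "g v = 0")
        case False
        then have "g v > 0" using g_nonneg by (metis less_eq_real_def)
        then show ?thesis using elim g_nonneg by simp
      qed simp
    qed
  qed
  have gz: "AE v in lborel. v \<le> 0 \<longrightarrow> g v = 0"
  proof -
    have "emeasure P {..0} = emeasure N (QU -` {..0} \<inter> space N)"
      unfolding P_def by (rule emeasure_distr) auto
    also have "QU -` {..0} \<inter> space N = QU -` {0} \<inter> space N"
      using q_nn unfolding QU_def by (auto intro: antisym)
    also have "emeasure N (QU -` {0} \<inter> space N) = emeasure P {0}"
      unfolding P_def by (rule emeasure_distr[symmetric]) auto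
    also have "\<dots> = (\<integral>\<^sup>+ v. ennreal (g v) * indicator {0} v \<partial>lborel)"
      unfolding Pd by (rule emeasure_density) auto
    also have "\<dots> = (\<integral>\<^sup>+ (v::real). 0 \<partial>lborel)"
    proof (rule nn_integral_cong_AE)
      show "AE v in lborel. ennreal (g v) * indicator {0} v = 0"
        using AE_lborel_singleton[of "0::real"] by eventually_elim auto
    qed
    finally have "emeasure P {..0} = 0" by simp
    moreover have "emeasure P {..0} = (\<integral>\<^sup>+ v. ennreal (g v) * indicator {..0} v \<partial>lborel)"
      unfolding Pd by (rule emeasure_density) auto
    ultimately have I0: "(\<integral>\<^sup>+ v. ennreal (g v) * indicator {..0::real} v \<partial>lborel) = 0" by simp
    have gm: "(\<lambda>v::real. ennreal (g v) * indicator {..0} v) \<in> borel_measurable lborel" by measurable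
    have "AE v in lborel. ennreal (g v) * indicator {..0} v = 0"
      using nn_integral_0_iff_AE[OF gm] I0 by simp
    then show ?thesis
      by eventually_elim (use g_nonneg in \<open>auto simp: indicator_def split: if_splits\<close>)
  qed
  define f where "f v = ennreal (if v > 0 then g v * c v / p else 0)" for v
  have f_meas: "f \<in> borel_measurable lborel" unfolding f_def by measurable
  have QY_meas: "(\<lambda>w. QYf (Y w)) \<in> measurable M lborel" by simp
  have "distr M lborel (\<lambda>w. QYf (Y w)) = density lborel f"
  proof (rule measure_eqI)
    show "sets (distr M lborel (\<lambda>w. QYf (Y w))) = sets (density lborel f)" by simp
    fix B assume "B \<in> sets (distr M lborel (\<lambda>w. QYf (Y w)))"
    then have B[measurable]: "B \<in> sets borel" by simp
    define k where "k v = g v * (indicator B v * c v)" for v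
    have k_meas[measurable]: "k \<in> borel_measurable borel" unfolding k_def by measurable
    have kint: "integrable lborel k"
    proof -
      have "integrable P (\<lambda>v. indicator B v *\<^sub>R c v)"
        using integrable_mult_indicator[OF _ cint, of B] by (simp add: P_def)
      then show ?thesis unfolding Pd k_def
        by (subst (asm) integrable_density) (auto simp: g_nonneg)
    qed
    have knn: "AE v in lborel. 0 \<le> k v"
      using gc_ae by eventually_elim (auto simp: k_def indicator_def)
    have kI: "integral\<^sup>L lborel k = (LINT v:B|P. c v)"
      unfolding Pd set_lebesgue_integral_def k_def
      by (subst integral_density) (auto simp: g_nonneg)
    have "emeasure (density lborel f) B = (\<integral>\<^sup>+ v. f v * indicator B v \<partial>lborel)"
      using f_meas by (subst emeasure_density) auto
    also have "\<dots> = (\<integral>\<^sup>+ v. ennreal (k v) / ennreal p \<partial>lborel)"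
    proof (rule nn_integral_cong_AE)
      show "AE v in lborel. f v * indicator B v = ennreal (k v) / ennreal p"
        using gz
      proof eventually_elim
        case (elim v)
        show ?case
        proof (cases "v > 0")
          case True
          then show ?thesis using p_pos
            by (auto simp: f_def k_def indicator_def ennreal_div_real[OF p_pos] mult.commute)
        next
          case False
          then show ?thesis using elim by (auto simp: f_def k_def)
        qed
      qed
    qed
    also have "\<dots> = (\<integral>\<^sup>+ v. ennreal (k v) \<partial>lborel) / ennreal p"
      by (rule nn_integral_divide) measurable
    also have "(\<integral>\<^sup>+ v. ennreal (k v) \<partial>lborel) = ennreal (integral\<^sup>L lborel k)"
      by (rule nn_integral_eq_integral[OF kint knn])
    also have "integral\<^sup>L lborel k = measure N {w \<in> space N. (\<forall>i. U0s w $ i < (\<Lambda> *v U1 w + \<tau>) $ i) \<and> QU w \<in> B}"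
      using bspec[OF cc B] kI by simp
    also have "ennreal \<dots> / ennreal p = emeasure N {w \<in> space N. (\<forall>i. U0s w $ i < (\<Lambda> *v U1 w + \<tau>) $ i) \<and> QU w \<in> B} / emeasure N Ev"
      by (simp add: N.emeasure_eq_measure p_def)
    also have "\<dots> = emeasure (distr M lborel (\<lambda>w. QYf (Y w))) B"
      using law[OF B] by simp
    finally show "emeasure (distr M lborel (\<lambda>w. QYf (Y w))) B = emeasure (density lborel f) B" by simp
  qed
  then have "distributed M lborel (\<lambda>w. QYf (Y w)) f"
    unfolding distributed_def using f_meas QY_meas by simp
  then show ?thesis unfolding f_def p_def Ev_def QYf_def \<Lambda>_def Ob_def .
qed

end
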